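(* Let $\tau=(\tau,A,a)$ be a primitive substitution and let $u,v$ be non-empty prefixes of $X_\tau$ with $|u|<|v|$. Then there exist an integer $k\geq 1$ and morphisms $\lambda:R_v\to R_u^+$ and $\kappa:R_u\to R_v^+$ such that $$\tau_v\kappa=\kappa\tau_u,\quad \tau_u\lambda=\lambda\tau_v,\quad \kappa\lambda=\tau_v^k,\quad \lambda\kappa=\tau_u^k.$$
   Context: A substitution is a triple $(\tau,A,a)$: $A$ a finite alphabet, $\tau:A\to A^+$ a morphism (extended by concatenation), $a\in A$ with $\tau(a)$ starting with $a$; its fixed point $X_\tau$ is the unique sequence starting with $a$ with $\tau(X_\tau)=X_\tau$. It is primitive if some power of its matrix $M_\tau$ ($(i,j)$ entry = number of occurrences of $i$ in $\tau(j)$) is positive; then $X_\tau$ is uniformly recurrent. For a non-empty prefix $u$ of a uniformly recurrent sequence $X$, a return word on $u$ is a factor $X_{[i,j-1]}$ where $i<j$ are two successive occurrences of $u$ in $X$; there are finitely many, and $X$ factors uniquely as $X=m_0m_1m_2\cdots$ with each $m_n$ a return word on $u$. Enumerating the return words in order of first appearance in $(m_n)$ gives a bijection $\Theta_u$ from $R_u=\{1,\dots,N\}$ ($N$ the number of return words) to the set of return words, extended to a morphism $R_u^*\to A^*$, which is injective. The return substitution $\tau_u:R_u\to R_u^+$ is the unique morphism with $\Theta_u\tau_u=\tau\Theta_u$ (it exists, and $(\tau_u,R_u,1)$ is a primitive substitution). *)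

theory Defs
  imports Main "HOL-Library.Infinite_Set"
begin

text \<open>Morphisms of free monoids are given by their values on letters
  (type 'a \<Rightarrow> 'b list) and extended by concatenation.\<close>

definition ext :: "('a \<Rightarrow> 'b list) \<Rightarrow> 'a list \<Rightarrow> 'b list" where
  "ext f w = concat (map f w)"

definition substitution :: "('a \<Rightarrow> 'a list) \<Rightarrow> 'a set \<Rightarrow> 'a \<Rightarrow> bool" where
  "substitution tau A a \<longleftrightarrow> finite A \<and> a \<in> A \<and>
     (\<forall>b\<in>A. tau b \<noteq> [] \<and> set (tau b) \<subseteq> A) \<and> hd (tau a) = a"

definition subst_matrix :: "('a \<Rightarrow> 'a list) \<Rightarrow> 'a \<Rightarrow> 'a \<Rightarrow> nat" where
  "subst_matrix tau i j = count_list (tau j) i"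

definition mat_mult :: "'a set \<Rightarrow> ('a \<Rightarrow> 'a \<Rightarrow> nat) \<Rightarrow> ('a \<Rightarrow> 'a \<Rightarrow> nat) \<Rightarrow> 'a \<Rightarrow> 'a \<Rightarrow> nat" where
  "mat_mult A P Q i j = (\<Sum>l\<in>A. P i l * Q l j)"

fun mat_pow :: "'a set \<Rightarrow> ('a \<Rightarrow> 'a \<Rightarrow> nat) \<Rightarrow> nat \<Rightarrow> 'a \<Rightarrow> 'a \<Rightarrow> nat" where
  "mat_pow A M 0 = (\<lambda>i j. if i = j then 1 else 0)"
| "mat_pow A M (Suc n) = mat_mult A (mat_pow A M n) M"

definition primitive :: "('a \<Rightarrow> 'a list) \<Rightarrow> 'a set \<Rightarrow> 'a \<Rightarrow> bool" where
  "primitive tau A a \<longleftrightarrow> substitution tau A a \<and>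
     (\<exists>n\<ge>1. \<forall>i\<in>A. \<forall>j\<in>A. mat_pow A (subst_matrix tau) n i j > 0)"

text \<open>X is the fixed point of (tau, A, a): an infinite sequence over A starting
  with a with tau(X) = X, i.e. tau applied to every prefix of X is a prefix of X.\<close>

definition fixed_point :: "('a \<Rightarrow> 'a list) \<Rightarrow> 'a set \<Rightarrow> 'a \<Rightarrow> (nat \<Rightarrow> 'a) \<Rightarrow> bool" where
  "fixed_point tau A a X \<longleftrightarrow> X 0 = a \<and> (\<forall>n. X n \<in> A) \<and>
     (\<forall>n. let w = ext tau (map X [0..<n]) in \<forall>j<length w. X j = w ! j)"

definition is_prefix_of :: "'a list \<Rightarrow> (nat \<Rightarrow> 'a) \<Rightarrow> bool" where
  "is_prefix_of u X \<longleftrightarrow> u = map X [0..<length u]"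

definition occurs_at :: "'a list \<Rightarrow> (nat \<Rightarrow> 'a) \<Rightarrow> nat \<Rightarrow> bool" where
  "occurs_at u X i \<longleftrightarrow> map X [i..<i + length u] = u"

definition occ :: "(nat \<Rightarrow> 'a) \<Rightarrow> 'a list \<Rightarrow> nat \<Rightarrow> nat" where
  "occ X u n = enumerate {i. occurs_at u X i} n"

definition retw :: "(nat \<Rightarrow> 'a) \<Rightarrow> 'a list \<Rightarrow> nat \<Rightarrow> 'a list" where
  "retw X u n = map X [occ X u n..<occ X u (Suc n)]"

definition first_app :: "(nat \<Rightarrow> 'a) \<Rightarrow> 'a list \<Rightarrow> nat set" where
  "first_app X u = {n. \<forall>j<n. retw X u j \<noteq> retw X u n}"

definition R :: "(nat \<Rightarrow> 'a) \<Rightarrow> 'a list \<Rightarrow> nat set" where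
  "R X u = {1..card (range (retw X u))}"

definition Theta :: "(nat \<Rightarrow> 'a) \<Rightarrow> 'a list \<Rightarrow> nat \<Rightarrow> 'a list" where
  "Theta X u i = retw X u (sorted_list_of_set (first_app X u) ! (i - 1))"

definition ret_subst :: "('a \<Rightarrow> 'a list) \<Rightarrow> (nat \<Rightarrow> 'a) \<Rightarrow> 'a list \<Rightarrow> nat \<Rightarrow> nat list" where
  "ret_subst tau X u i =
     (THE w. set w \<subseteq> R X u \<and> ext (Theta X u) w = ext tau (Theta X u i))"

end

theory Submission
  imports Defs
begin


lemma ext_Nil[simp]: "ext f [] = []" by (simp add: ext_def)
lemma ext_Cons[simp]: "ext f (x#xs) = f x @ ext f xs" by (simp add: ext_def)
lemma ext_append[simp]: "ext f (xs@ys) = ext f xs @ ext f ys" by (simp add: ext_def)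
lemma ext_ext: "ext f (ext g w) = ext (\<lambda>x. ext f (g x)) w" by (induction w) auto
lemma ext_cong: "(\<And>x. x \<in> set w \<Longrightarrow> f x = g x) \<Longrightarrow> ext f w = ext g w"
  by (induction w) auto
lemma ext_single: "ext (\<lambda>x. [x]) w = w" by (induction w) auto
lemma set_ext: "set (ext f w) = (\<Union>x\<in>set w. set (f x))" by (induction w) auto

lemma funpow_ext: fixes f :: "'a \<Rightarrow> 'a list" shows "(ext f ^^ k) w = ext (\<lambda>x. (ext f ^^ k) [x]) w"
proof (induction k arbitrary: w)
  case 0 then show ?case by (induction w) auto
next
  case (Suc k)
  have "(ext f ^^ Suc k) w = ext f ((ext f ^^ k) w)" by simp
  also have "\<dots> = ext f (ext (\<lambda>x. (ext f ^^ k) [x]) w)" by (subst Suc.IH) (rule refl)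
  also have "\<dots> = ext (\<lambda>x. ext f ((ext f ^^ k) [x])) w" by (rule ext_ext)
  also have "\<dots> = ext (\<lambda>x. (ext f ^^ Suc k) [x]) w" by simp
  finally show ?case .
qed

lemma funpow_ext_append: fixes f :: "'a \<Rightarrow> 'a list" shows "(ext f ^^ k) (xs @ ys) = (ext f ^^ k) xs @ (ext f ^^ k) ys"
proof -
  define g where "g = (\<lambda>x. (ext f ^^ k) [x])"
  have "(ext f ^^ k) (xs @ ys) = ext g (xs @ ys)" unfolding g_def by (rule funpow_ext)
  also have "\<dots> = ext g xs @ ext g ys" by simp
  also have "ext g xs = (ext f ^^ k) xs" unfolding g_def by (rule funpow_ext[symmetric])
  also have "ext g ys = (ext f ^^ k) ys" unfolding g_def by (rule funpow_ext[symmetric])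
  finally show ?thesis .
qed

lemma funpow_ext_Nil[simp]: fixes f :: "'a \<Rightarrow> 'a list" shows "(ext f ^^ k) [] = []"
  by (induction k) auto

lemma funpow_ext_ext: fixes f :: "'a \<Rightarrow> 'a list" shows "(ext f ^^ k) (ext g w) = ext (\<lambda>x. (ext f ^^ k) (g x)) w"
proof (induction w)
  case (Cons x w)
  have "(ext f ^^ k) (ext g (x # w)) = (ext f ^^ k) (g x @ ext g w)" by simp
  also have "\<dots> = (ext f ^^ k) (g x) @ (ext f ^^ k) (ext g w)" by (rule funpow_ext_append)
  finally show ?case using Cons by simp
qed simp

lemma funpow_ext_comm: fixes f :: "'a \<Rightarrow> 'a list" shows "ext f ((ext f ^^ k) w) = (ext f ^^ k) (ext f w)"
  by (rule funpow_swap1)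


lemma length_ext: "length (ext f w) = (\<Sum>x\<leftarrow>w. length (f x))"
  by (induction w) auto

lemma count_ext:
  assumes "finite A" "set w \<subseteq> A"
  shows "count_list (ext f w) i = (\<Sum>l\<in>A. count_list w l * count_list (f l) i)"
  using assms(2)
proof (induction w)
  case Nil then show ?case by simp
next
  case (Cons x w)
  have xA: "x \<in> A" using Cons by simp
  have "(\<Sum>l\<in>A. count_list (x#w) l * count_list (f l) i)
      = (\<Sum>l\<in>A. (if x = l then count_list (f l) i else 0) + count_list w l * count_list (f l) i)"
  proof (rule sum.cong)
    fix l show "count_list (x#w) l * count_list (f l) i = (if x = l then count_list (f l) i else 0) + count_list w l * count_list (f l) i"
      by (cases "x = l") simp_all
  qed simp
  also have "\<dots> = (\<Sum>l\<in>A. (if x = l then count_list (f l) i else 0)) + (\<Sum>l\<in>A. count_list w l * count_list (f l) i)"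
    by (rule sum.distrib)
  also have "(\<Sum>l\<in>A. (if x = l then count_list (f l) i else 0)) = count_list (f x) i"
    using assms(1) xA by (simp add: sum.delta)
  finally show ?case using Cons by simp
qed

locale fp =
  fixes tau :: "'a \<Rightarrow> 'a list" and A :: "'a set" and a :: 'a and X :: "nat \<Rightarrow> 'a"
  assumes prim: "primitive tau A a" and fixp: "fixed_point tau A a X"
begin

abbreviation T :: "'a list \<Rightarrow> 'a list" where "T \<equiv> ext tau"

definition pre :: "nat \<Rightarrow> 'a list" where "pre n = map X [0..<n]"

definition L :: "nat \<Rightarrow> nat \<Rightarrow> nat" where "L k n = length ((T ^^ k) (pre n))"

lemma finA: "finite A" and aA: "a \<in> A" and hda: "hd (tau a) = a"
  using prim unfolding primitive_def substitution_def by auto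

lemma tauA: "b \<in> A \<Longrightarrow> tau b \<noteq> [] \<and> set (tau b) \<subseteq> A"
  using prim unfolding primitive_def substitution_def by auto

lemma XA: "X n \<in> A" and X0: "X 0 = a"
  using fixp unfolding fixed_point_def by auto

lemma length_pre[simp]: "length (pre n) = n" by (simp add: pre_def)
lemma pre_0[simp]: "pre 0 = []" by (simp add: pre_def)
lemma nth_pre[simp]: "t < n \<Longrightarrow> pre n ! t = X t" by (simp add: pre_def)
lemma set_pre: "set (pre n) \<subseteq> A" using XA by (auto simp: pre_def)

lemma T_pre: "T (pre n) = pre (length (T (pre n)))"
proof -
  have "\<forall>j<length (T (pre n)). X j = T (pre n) ! j"
    using fixp unfolding fixed_point_def Let_def pre_def by blast
  then show ?thesis by (intro nth_equalityI) auto
qed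

lemma Tk_pre: "(T ^^ k) (pre n) = pre (L k n)"
proof (induction k)
  case 0 then show ?case by (simp add: L_def)
next
  case (Suc k)
  have "(T ^^ Suc k) (pre n) = T (pre (L k n))" using Suc by simp
  also have "\<dots> = pre (length (T (pre (L k n))))" by (rule T_pre)
  finally show ?case unfolding L_def by (metis length_pre)
qed

lemma T_closed: "set w \<subseteq> A \<Longrightarrow> set (T w) \<subseteq> A"
  using tauA by (auto simp: set_ext)

lemma Tk_closed: "set w \<subseteq> A \<Longrightarrow> set ((T ^^ k) w) \<subseteq> A"
  by (induction k) (auto simp: T_closed)

lemma T_len: "set w \<subseteq> A \<Longrightarrow> length w \<le> length (T w)"
proof (induction w)
  case (Cons x w)
  then have "length (tau x) \<ge> 1" using tauA by (simp add: Suc_le_eq)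
  then show ?case using Cons by simp
qed simp

lemma Tk_len: "set w \<subseteq> A \<Longrightarrow> length w \<le> length ((T ^^ k) w)"
proof (induction k)
  case (Suc k)
  then show ?case using T_len[OF Tk_closed[OF Suc.prems, of k]] by simp
qed simp

lemma pre_split: "p \<le> q \<Longrightarrow> pre q = pre p @ map X [p..<q]"
  unfolding pre_def by (metis map_append le_add_diff_inverse upt_add_eq_append zero_le)

lemma seg: assumes "p \<le> q"
  shows "(T ^^ k) (map X [p..<q]) = map X [L k p..<L k q]"
    and "L k q = L k p + length ((T ^^ k) (map X [p..<q]))"
proof -
  have e: "pre (L k q) = pre (L k p) @ (T ^^ k) (map X [p..<q])"
    using arg_cong[OF pre_split[OF assms], of "T ^^ k"] by (simp add: funpow_ext_append Tk_pre)
  then show "L k q = L k p + length ((T ^^ k) (map X [p..<q]))"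
    by (metis length_append length_pre)
  have "(T ^^ k) (map X [p..<q]) = drop (L k p) (pre (L k q))" using e by simp
  then show "(T ^^ k) (map X [p..<q]) = map X [L k p..<L k q]" by (simp add: pre_def drop_map)
qed

lemma L_mono: "p \<le> q \<Longrightarrow> L k p + (q - p) \<le> L k q"
proof -
  assume pq: "p \<le> q"
  have "set (map X [p..<q]) \<subseteq> A" using XA by auto
  from Tk_len[OF this, of k] seg(2)[OF pq, of k] show ?thesis by simp
qed

lemma L0[simp]: "L k 0 = 0" by (simp add: L_def)

lemma occ_transfer:
  assumes "occurs_at (pre m) X p" "j \<le> L k m"
  shows "occurs_at (pre j) X (L k p)"
proof -
  have o: "map X [p..<p+m] = pre m" using assms(1) by (simp add: occurs_at_def)
  have e: "map X [L k p..<L k (p+m)] = pre (L k m)"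
    using seg(1)[of p "p+m" k] o Tk_pre by simp
  have len: "L k (p+m) - L k p = L k m"
    using arg_cong[OF e, of length] by simp
  have nth: "X (L k p + t) = X t" if t: "t < L k m" for t
  proof -
    have "X (L k p + t) = map X [L k p..<L k (p+m)] ! t" using t len by simp
    also have "\<dots> = X t" using e t by simp
    finally show ?thesis .
  qed
  show ?thesis unfolding occurs_at_def
    using assms(2) by (intro nth_equalityI) (auto simp: nth)
qed

lemma mat_count: "j \<in> A \<Longrightarrow> mat_pow A (subst_matrix tau) n i j = count_list ((T ^^ n) [j]) i"
proof (induction n arbitrary: i j)
  case 0 then show ?case by simp
next
  case (Suc n)
  have "mat_pow A (subst_matrix tau) (Suc n) i j
      = (\<Sum>l\<in>A. count_list ((T ^^ n) [l]) i * count_list (tau j) l)"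
    unfolding mat_pow.simps mat_mult_def
    by (rule sum.cong) (auto simp: Suc.IH subst_matrix_def)
  also have "\<dots> = (\<Sum>l\<in>A. count_list (tau j) l * count_list ((T ^^ n) [l]) i)"
    by (simp add: mult.commute)
  also have "\<dots> = count_list (ext (\<lambda>x. (T ^^ n) [x]) (tau j)) i"
    by (rule count_ext[symmetric, OF finA tauA[OF Suc.prems, THEN conjunct2]])
  also have "\<dots> = count_list ((T ^^ n) (tau j)) i" by (simp flip: funpow_ext)
  also have "(T ^^ n) (tau j) = (T ^^ Suc n) [j]" by (simp only: funpow_Suc_right comp_apply) simp
  finally show ?case .
qed

lemma prim_all: "\<exists>N\<ge>1. \<forall>b\<in>A. \<forall>i\<in>A. i \<in> set ((T ^^ N) [b])"
proof -
  obtain N where N: "N \<ge> 1" "\<forall>i\<in>A. \<forall>j\<in>A. mat_pow A (subst_matrix tau) N i j > 0"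
    using prim unfolding primitive_def by blast
  show ?thesis
  proof (intro exI[of _ N] conjI ballI)
    fix b i assume bA: "b \<in> A" and iA: "i \<in> A"
    have "count_list ((T ^^ N) [b]) i > 0" using N(2) mat_count[OF bA, of N i] bA iA by metis
    then show "i \<in> set ((T ^^ N) [b])" by (metis count_list_0_iff less_irrefl)
  qed (use N in simp)
qed

lemma dichotomy: "(\<forall>n. X n = a) \<or> (\<forall>m. m < length ((T ^^ m) [a]))"
proof (cases "length (tau a) \<ge> 2")
  case True
  obtain rest where ta: "tau a = a # rest" using hda tauA[OF aA]
    by (cases "tau a") auto
  have rne: "rest \<noteq> []" and rA: "set rest \<subseteq> A" using True ta tauA[OF aA] by auto
  have "m < length ((T ^^ m) [a])" for m
  proof (induction m)
    case 0 then show ?case by simp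
  next
    case (Suc m)
    have "(T ^^ Suc m) [a] = (T ^^ m) ([a] @ rest)" by (simp only: funpow_Suc_right comp_apply) (simp add: ta)
    also have "\<dots> = (T ^^ m) [a] @ (T ^^ m) rest" by (rule funpow_ext_append)
    finally have "length ((T ^^ Suc m) [a]) = length ((T ^^ m) [a]) + length ((T ^^ m) rest)" by simp
    moreover have "length rest \<le> length ((T ^^ m) rest)" using Tk_len[OF rA] by blast
    moreover have "length rest \<ge> 1" using rne by (cases rest) auto
    ultimately show ?case using Suc by simp
  qed
  then show ?thesis by blast
next
  case False
  then have ta: "tau a = [a]" using hda tauA[OF aA]
    by (cases "tau a") (auto simp: Suc_le_eq)
  have pw: "(T ^^ n) [a] = [a]" for n by (induction n) (auto simp: ta)
  obtain N where "\<forall>b\<in>A. \<forall>i\<in>A. i \<in> set ((T ^^ N) [b])" using prim_all by blast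
  then have "\<forall>i\<in>A. i = a" using aA pw by fastforce
  then show ?thesis using XA by blast
qed

lemma stair: fixes f :: "nat \<Rightarrow> nat" and i :: nat shows "strict_mono f \<Longrightarrow> f (0::nat) = 0 \<Longrightarrow> \<exists>n. f n \<le> i \<and> i < f (Suc n)"
proof (induction i)
  case 0 then show ?case by (metis le_refl strict_mono_def zero_less_Suc)
next
  case (Suc i)
  then obtain n where n: "f n \<le> i" "i < f (Suc n)" by blast
  show ?case
  proof (cases "Suc i < f (Suc n)")
    case True then show ?thesis using n le_SucI by blast
  next
    case False
    then have "f (Suc n) = Suc i" using n by simp
    moreover have "f (Suc n) < f (Suc (Suc n))" using Suc.prems by (simp add: strict_mono_def)
    ultimately show ?thesis by (metis order_refl)
  qed
qed

lemma recurrence: "\<exists>B. \<forall>i. \<exists>j. i \<le> j \<and> j < i + B \<and> occurs_at (pre m) X j"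
proof (cases "\<forall>n. X n = a")
  case True
  have "occurs_at (pre m) X i" for i
    unfolding occurs_at_def by (intro nth_equalityI) (auto simp: True)
  then show ?thesis by (intro exI[of _ 1]) auto
next
  case False
  then have grow: "\<And>m. m < length ((T ^^ m) [a])" using dichotomy by blast
  obtain N where N: "\<forall>b\<in>A. \<forall>i\<in>A. i \<in> set ((T ^^ N) [b])" using prim_all by blast
  define K where "K = m + N"
  have pa: "(T ^^ m) [a] = pre (L m 1)" using Tk_pre[of m 1] X0 by (simp add: pre_def)
  have Lm: "m < L m 1" using grow[of m] pa by simp
  have "\<exists>s. s + m \<le> length ((T ^^ K) [b]) \<and> (\<forall>t<m. (T ^^ K) [b] ! (s + t) = X t)" if bA: "b \<in> A" for b
  proof -
    obtain xs ys where sp: "(T ^^ N) [b] = xs @ a # ys" using N bA aA split_list by metis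
    have "(T ^^ K) [b] = (T ^^ m) ((T ^^ N) [b])" by (simp add: K_def funpow_add)
    also have "\<dots> = (T ^^ m) xs @ (T ^^ m) [a] @ (T ^^ m) ys"
      unfolding sp by (metis append_Cons append_Nil funpow_ext_append)
    finally have e: "(T ^^ K) [b] = (T ^^ m) xs @ pre (L m 1) @ (T ^^ m) ys" using pa by simp
    show ?thesis
      by (rule exI[of _ "length ((T ^^ m) xs)"]) (use Lm in \<open>auto simp: e nth_append\<close>)
  qed
  then obtain off where off: "\<And>b. b \<in> A \<Longrightarrow> off b + m \<le> length ((T ^^ K) [b]) \<and> (\<forall>t<m. (T ^^ K) [b] ! (off b + t) = X t)"
    by metis
  define M where "M = Max ((\<lambda>b. length ((T ^^ K) [b])) ` A)"
  have leM: "b \<in> A \<Longrightarrow> length ((T ^^ K) [b]) \<le> M" for b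
    unfolding M_def using finA by (intro Max_ge) auto
  have blk: "(T ^^ K) [X n] = map X [L K n..<L K (Suc n)]" for n
    using seg(1)[of n "Suc n" K] by simp
  have blen: "L K (Suc n) = L K n + length ((T ^^ K) [X n])" for n
    using seg(2)[of n "Suc n" K] by simp
  have sm: "strict_mono (L K)"
  proof (rule strict_monoI)
    fix p q :: nat assume "p < q" then show "L K p < L K q" using L_mono[of p q K] by linarith
  qed
  show ?thesis
  proof (rule exI[of _ "2*M+1"], intro allI)
    fix i
    obtain n where n: "L K n \<le> i" "i < L K (Suc n)" using stair[OF sm] by auto
    define b where "b = X (Suc n)"
    define j where "j = L K (Suc n) + off b"
    have bA: "b \<in> A" using XA b_def by simp
    have "occurs_at (pre m) X j"
      unfolding occurs_at_def
    proof (intro nth_equalityI)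
      fix t assume "t < length (map X [j..<j + length (pre m)])"
      then have t: "t < m" by simp
      have "X (j + t) = map X [L K (Suc n)..<L K (Suc (Suc n))] ! (off b + t)"
        using off[OF bA] t blen[of "Suc n"] unfolding j_def b_def
        by (subst nth_map_upt) (auto simp: add.assoc)
      also have "\<dots> = (T ^^ K) [b] ! (off b + t)" unfolding b_def by (simp only: blk)
      also have "\<dots> = X t" using off[OF bA] t by blast
      finally show "map X [j..<j + length (pre m)] ! t = pre m ! t" using t by simp
    qed simp
    moreover have "i \<le> j" using n unfolding j_def by simp
    moreover have "j < i + (2*M+1)"
    proof -
      have f1: "L K (Suc n) \<le> i + M" using n(1) blen[of n] leM[OF XA[of n]] by linarith
      have f2: "off b \<le> M" using off[OF bA] leM[OF bA] by linarith
      show ?thesis using f1 f2 unfolding j_def by linarith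
    qed
    ultimately show "\<exists>j. i \<le> j \<and> j < i + (2 * M + 1) \<and> occurs_at (pre m) X j" by blast
  qed
qed

end




locale rw = fp +
  fixes u :: "'a list"
  assumes une: "u \<noteq> []" and upre: "is_prefix_of u X"
begin

definition S :: "nat set" where "S = {i. occurs_at u X i}"
abbreviation W where "W \<equiv> range (retw X u)"
abbreviation Th where "Th \<equiv> Theta X u"
abbreviation RR where "RR \<equiv> R X u"

lemma u_pre: "u = pre (length u)" using upre by (simp add: is_prefix_of_def pre_def)

lemma occ0: "occurs_at u X 0" using upre by (simp add: is_prefix_of_def occurs_at_def)

lemma gaps: "\<exists>B. \<forall>i. \<exists>j. i \<le> j \<and> j < i + B \<and> occurs_at u X j"
  using recurrence[of "length u"] u_pre by metis

lemma infS: "infinite S"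
proof -
  obtain B where B: "\<forall>i. \<exists>j. i \<le> j \<and> j < i + B \<and> occurs_at u X j" using gaps by blast
  show ?thesis unfolding infinite_nat_iff_unbounded_le S_def using B by blast
qed

lemma occ_eq: "occ X u n = enumerate S n" by (simp add: occ_def S_def)

lemma occ_in: "occurs_at u X (occ X u n)"
  using enumerate_in_set[OF infS] by (simp add: occ_eq S_def)

lemma occ_less_iff[simp]: "occ X u m < occ X u n \<longleftrightarrow> m < n"
  using infS by (simp add: occ_eq)

lemma occ_le_iff[simp]: "occ X u m \<le> occ X u n \<longleftrightarrow> m \<le> n"
  using infS by (simp add: occ_eq)

lemma occ_0: "occ X u 0 = 0"
  using occ0 by (simp add: occ_eq S_def enumerate_0 Least_eq_0)

lemma occ_surj: "occurs_at u X p \<Longrightarrow> \<exists>n. occ X u n = p"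
  using enumerate_Ex[OF infS] by (simp add: occ_eq S_def)

lemma occ_next: "occurs_at u X p \<Longrightarrow> occ X u n < p \<Longrightarrow> occ X u (Suc n) \<le> p"
  by (metis occ_surj occ_less_iff occ_le_iff Suc_leI)

lemma gapB: "\<exists>B. \<forall>n. occ X u (Suc n) - occ X u n \<le> B"
proof -
  obtain B where B: "\<forall>i. \<exists>j. i \<le> j \<and> j < i + B \<and> occurs_at u X j" using gaps by blast
  have "occ X u (Suc n) - occ X u n \<le> B" for n
  proof -
    obtain j where j: "Suc (occ X u n) \<le> j" "j < Suc (occ X u n) + B" "occurs_at u X j" using B by blast
    have "occ X u (Suc n) \<le> j" using occ_next[OF j(3)] j(1) by simp
    then show ?thesis using j(2) by linarith
  qed
  then show ?thesis by blast
qed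

lemma retw_ne: "retw X u n \<noteq> []"
proof -
  have "occ X u n < occ X u (Suc n)" by simp
  then show ?thesis unfolding retw_def by (auto simp del: occ_less_iff occ_le_iff)
qed

lemma W_ne: "r \<in> W \<Longrightarrow> r \<noteq> []"
  by (elim rangeE) (simp add: retw_ne)

lemma finW: "finite W"
proof -
  obtain B where B: "\<And>n. occ X u (Suc n) - occ X u n \<le> B" using gapB by blast
  have "W \<subseteq> {xs. set xs \<subseteq> A \<and> length xs \<le> B}"
    using B XA by (auto simp: retw_def)
  then show ?thesis using finite_lists_length_le[OF finA] finite_subset by blast
qed

lemma first_app_bij: "bij_betw (retw X u) (first_app X u) W"
proof -
  have "inj_on (retw X u) (first_app X u)"
  proof (rule inj_onI)
    fix n m assume n: "n \<in> first_app X u" and m: "m \<in> first_app X u" and e: "retw X u n = retw X u m"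
    show "n = m"
    proof (rule ccontr)
      assume "n \<noteq> m"
      then consider "n < m" | "m < n" by linarith
      then show False using n m e unfolding first_app_def by cases auto
    qed
  qed
  moreover have "W \<subseteq> retw X u ` first_app X u"
  proof
    fix w assume "w \<in> W"
    then obtain n where n: "retw X u n = w" by blast
    define n0 where "n0 = (LEAST n. retw X u n = w)"
    have "retw X u n0 = w" unfolding n0_def by (rule LeastI[of _ n]) (rule n)
    moreover have "n0 \<in> first_app X u"
    proof -
      have "retw X u j \<noteq> retw X u n0" if "j < n0" for j
        using not_less_Least[of j "\<lambda>n. retw X u n = w"] that \<open>retw X u n0 = w\<close> n0_def by simp
      then show ?thesis unfolding first_app_def by simp
    qed
    ultimately show "w \<in> retw X u ` first_app X u" by blast
  qed
  ultimately show ?thesis unfolding bij_betw_def by blast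
qed

lemma finF: "finite (first_app X u)"
  using bij_betw_finite[OF first_app_bij] finW by blast

lemma cardF: "card (first_app X u) = card W"
  using bij_betw_same_card[OF first_app_bij] .

lemma Theta_bij: "bij_betw Th RR W"
proof -
  define sl where "sl = sorted_list_of_set (first_app X u)"
  define N where "N = card W"
  have RR: "RR = {1..N}" by (simp add: R_def N_def)
  have lsl: "length sl = N" using cardF finF by (simp add: sl_def N_def)
  have b1: "bij_betw (\<lambda>i. i - 1) {1..N} {..<N}"
    by (rule bij_betw_byWitness[where f'=Suc]) auto
  have b2: "bij_betw ((!) sl) {..<N} (first_app X u)"
    by (rule bij_betw_nth) (use finF lsl in \<open>auto simp: sl_def\<close>)
  have "bij_betw (retw X u \<circ> ((!) sl) \<circ> (\<lambda>i. i - 1)) {1..N} W"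
    by (rule bij_betw_trans[OF b1 bij_betw_trans[OF b2 first_app_bij]])
  moreover have "retw X u \<circ> ((!) sl) \<circ> (\<lambda>i. i - 1) = Th"
    by (rule ext) (simp add: Theta_def sl_def)
  ultimately show ?thesis using RR by simp
qed

lemma retw_seg: "retw X u n @ u = map X [occ X u n..<occ X u (Suc n) + length u]"
proof -
  have "u = map X [occ X u (Suc n)..<occ X u (Suc n) + length u]"
    using occ_in[of "Suc n"] by (simp add: occurs_at_def)
  then show ?thesis unfolding retw_def
    by (metis less_imp_le_nat lessI map_append occ_less_iff upt_add_eq_append)
qed

lemma W_start: assumes "r \<in> W" shows "take (length u) (r @ u) = u"
proof -
  obtain n where r: "r = retw X u n" using assms by blast
  have le: "occ X u n \<le> occ X u (Suc n)" by simp
  have "take (length u) (r @ u) = map X [occ X u n..<occ X u n + length u]"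
    unfolding r retw_seg using le by (simp add: take_map)
  then show ?thesis using occ_in[of n] by (simp add: occurs_at_def)
qed

lemma W_occ:
  assumes "r \<in> W" "t \<le> length r" "take (length u) (drop t (r @ u)) = u"
  shows "t = 0 \<or> t = length r"
proof -
  obtain n where r: "r = retw X u n" using assms(1) by blast
  define p where "p = occ X u n"
  define q where "q = occ X u (Suc n)"
  have pq: "p < q" by (simp add: p_def q_def)
  have lr: "length r = q - p" by (simp add: r retw_def p_def q_def)
  have "take (length u) (drop t (r @ u)) = map X [p + t..<p + t + length u]"
    unfolding r retw_seg p_def[symmetric] q_def[symmetric] using assms(2) lr pq by (simp add: take_map drop_map)
  then have o: "occurs_at u X (p + t)" using assms(3) by (simp add: occurs_at_def)
  show ?thesis
  proof (cases "t = 0")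
    case False
    then have "q \<le> p + t" using occ_next[OF o, of n] by (simp add: p_def q_def)
    then show ?thesis using assms(2) lr by arith
  qed simp
qed

lemma last_eq:
  assumes "r \<in> W" "r' \<in> W" "s @ r = s' @ r'" "length r \<le> length r'"
  shows "r = r'"
proof -
  from assms(3) obtain us where c: "(s = s' @ us \<and> us @ r = r') \<or> (s @ us = s' \<and> r = us @ r')"
    using append_eq_append_conv2 by blast
  then show ?thesis
  proof
    assume h: "s = s' @ us \<and> us @ r = r'"
    have r': "r' = us @ r" using h by simp
    have "drop (length us) (r' @ u) = r @ u" unfolding r' by simp
    then have "take (length u) (drop (length us) (r' @ u)) = u"
      using W_start[OF assms(1)] by simp
    moreover have "length us \<le> length r'" unfolding r' by simp
    ultimately have "length us = 0 \<or> length us = length r'"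
      using W_occ[OF assms(2)] by blast
    moreover have "r \<noteq> []" using assms(1) by (rule W_ne)
    moreover have "length r' = length us + length r" unfolding r' by simp
    ultimately have "us = []" by auto
    then show ?thesis using r' by simp
  next
    assume h2: "s @ us = s' \<and> r = us @ r'"
    then have "length r = length us + length r'" by simp
    then have "us = []" using assms(4) by simp
    then show ?thesis using h2 by simp
  qed
qed

lemma concat_inj:
  "set xs \<subseteq> W \<Longrightarrow> set ys \<subseteq> W \<Longrightarrow> concat xs = concat ys \<Longrightarrow> xs = ys"
proof (induction xs arbitrary: ys rule: rev_induct)
  case Nil
  have "x \<noteq> []" if "x \<in> set ys" for x using that Nil.prems(2) W_ne by blast
  then show ?case using Nil.prems(3) by (cases ys) auto
next
  case (snoc r xs)
  have "r \<noteq> []" using snoc.prems W_ne by simp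
  have "ys \<noteq> []"
  proof
    assume "ys = []"
    then have "concat (xs @ [r]) = []" using snoc.prems(3) by simp
    then show False using \<open>r \<noteq> []\<close> by simp
  qed
  then obtain ys' r' where ys: "ys = ys' @ [r']" by (cases ys rule: rev_exhaust) auto
  have e: "concat xs @ r = concat ys' @ r'" using snoc.prems ys by simp
  have rW: "r \<in> W" "r' \<in> W" using snoc.prems ys by auto
  have "r = r'"
  proof (cases "length r \<le> length r'")
    case True then show ?thesis using last_eq[OF rW e] by simp
  next
    case False then show ?thesis using last_eq[OF rW(2,1) e[symmetric]] by simp
  qed
  then have "concat xs = concat ys'" using e by simp
  moreover have "set xs \<subseteq> W" "set ys' \<subseteq> W" using snoc.prems ys by auto
  ultimately have "xs = ys'" using snoc.IH[of ys'] by blast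
  then show ?case using \<open>r = r'\<close> ys by simp
qed

lemma ext_inj:
  assumes "set w \<subseteq> RR" "set w' \<subseteq> RR" "ext Th w = ext Th w'"
  shows "w = w'"
proof -
  have b: "bij_betw Th RR W" by (rule Theta_bij)
  have "set (map Th w) \<subseteq> W" "set (map Th w') \<subseteq> W"
    using assms(1,2) bij_betw_apply[OF b] by auto
  then have "map Th w = map Th w'"
    using concat_inj[of "map Th w" "map Th w'"] assms(3) unfolding ext_def by blast
  moreover have "inj_on Th (set w \<union> set w')"
    using b assms unfolding bij_betw_def by (meson inj_on_subset le_sup_iff)
  ultimately show ?thesis using inj_on_map_eq_map by blast
qed

lemma parse:
  assumes "occurs_at u X p" "occurs_at u X q" "p \<le> q"
  shows "\<exists>w. set w \<subseteq> RR \<and> ext Th w = map X [p..<q] \<and> (p < q \<longrightarrow> w \<noteq> [])"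
proof -
  obtain n m where nm: "occ X u n = p" "occ X u m = q" using occ_surj assms by metis
  then have "n \<le> m" using assms(3) by (metis occ_le_iff)
  have "\<forall>j. \<exists>i. i \<in> RR \<and> Th i = retw X u j"
    using Theta_bij unfolding bij_betw_def by (metis (mono_tags, lifting) image_iff rangeI)
  then obtain idx where idx: "\<And>j. idx j \<in> RR \<and> Th (idx j) = retw X u j" by metis
  have c: "map X [occ X u n..<occ X u m'] = ext Th (map idx [n..<m'])" if "n \<le> m'" for m'
    using that
  proof (induction m')
    case 0 then show ?case by simp
  next
    case (Suc m')
    show ?case
    proof (cases "n = Suc m'")
      case True then show ?thesis by simp
    next
      case False
      then have le: "n \<le> m'" using Suc by simp
      have "map X [occ X u n..<occ X u (Suc m')] = map X [occ X u n..<occ X u m'] @ retw X u m'"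
        unfolding retw_def using le
        by (metis le_less map_append occ_le_iff upt_add_eq_append lessI less_imp_le_nat nat_le_iff_add)
      then show ?thesis using Suc.IH[OF le] le idx by (simp add: ext_def)
    qed
  qed
  show ?thesis
    by (rule exI[of _ "map idx [n..<m]"]) (use c[OF \<open>n \<le> m\<close>] nm idx in auto)
qed

lemma Theta_seg:
  assumes "i \<in> RR"
  shows "\<exists>p q. p < q \<and> occurs_at u X p \<and> occurs_at u X q \<and> Th i = map X [p..<q]"
proof -
  obtain n where "Th i = retw X u n" using Theta_bij assms unfolding bij_betw_def by blast
  then show ?thesis unfolding retw_def using occ_in by (metis lessI occ_less_iff)
qed

lemma Tk_occ: "occurs_at u X p \<Longrightarrow> occurs_at u X (L k p)"
proof -
  assume o: "occurs_at u X p"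
  have "set (pre (length u)) \<subseteq> A" by (rule set_pre)
  then have "length u \<le> L k (length u)" using Tk_len[of "pre (length u)" k] by (simp add: L_def)
  then show ?thesis using occ_transfer[of "length u" p "length u" k] o u_pre by simp
qed

lemma Tk_Theta:
  assumes "i \<in> RR"
  shows "\<exists>w. set w \<subseteq> RR \<and> ext Th w = (T ^^ k) (Th i)"
proof -
  obtain p q where pq: "p < q" "occurs_at u X p" "occurs_at u X q" "Th i = map X [p..<q]"
    using Theta_seg[OF assms] by blast
  have "(T ^^ k) (Th i) = map X [L k p..<L k q]" using seg(1) pq by simp
  moreover have "L k p \<le> L k q" using L_mono[of p q k] pq by simp
  ultimately show ?thesis using parse[OF Tk_occ[OF pq(2)] Tk_occ[OF pq(3)]] by metis
qed

lemma ret_subst_prop: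
  assumes "i \<in> RR"
  shows "set (ret_subst tau X u i) \<subseteq> RR \<and> ext Th (ret_subst tau X u i) = T (Th i)"
proof -
  obtain w where w: "set w \<subseteq> RR \<and> ext Th w = (T ^^ 1) (Th i)" using Tk_Theta[OF assms] by blast
  have "\<exists>!w. set w \<subseteq> R X u \<and> ext (Theta X u) w = T (Theta X u i)"
    using w ext_inj by auto
  then show ?thesis unfolding ret_subst_def by (rule theI')
qed

end


lemma ext_morph:
  assumes "\<And>i. i \<in> S \<Longrightarrow> set (f i) \<subseteq> S' \<and> ext g (f i) = h i" "set w \<subseteq> S"
  shows "set (ext f w) \<subseteq> S' \<and> ext g (ext f w) = ext h w"
  using assms(2) by (induction w) (auto dest: assms(1))

context rw
begin

lemma ret_morph:
  assumes "set w \<subseteq> RR"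
  shows "set (ext (ret_subst tau X u) w) \<subseteq> RR \<and> ext Th (ext (ret_subst tau X u) w) = T (ext Th w)"
proof -
  have "set (ext (ret_subst tau X u) w) \<subseteq> RR \<and> ext Th (ext (ret_subst tau X u) w) = ext (\<lambda>i. T (Th i)) w"
    by (rule ext_morph[OF ret_subst_prop assms])
  then show ?thesis by (simp add: ext_ext)
qed

lemma ret_morph_k:
  assumes "set w \<subseteq> RR"
  shows "set ((ext (ret_subst tau X u) ^^ k) w) \<subseteq> RR \<and> ext Th ((ext (ret_subst tau X u) ^^ k) w) = (T ^^ k) (ext Th w)"
proof (induction k)
  case 0 then show ?case using assms by simp
next
  case (Suc k)
  have "set ((ext (ret_subst tau X u) ^^ Suc k) w) \<subseteq> RR \<and> ext Th ((ext (ret_subst tau X u) ^^ Suc k) w) = T (ext Th ((ext (ret_subst tau X u) ^^ k) w))"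
    using ret_morph[of "(ext (ret_subst tau X u) ^^ k) w"] Suc by simp
  then show ?case using Suc by simp
qed

end



theorem proposition8:
  fixes tau :: "'a \<Rightarrow> 'a list" and A :: "'a set" and a :: 'a
    and X :: "nat \<Rightarrow> 'a" and u v :: "'a list"
  assumes "primitive tau A a"
    and "fixed_point tau A a X"
    and "u \<noteq> []" and "is_prefix_of u X"
    and "v \<noteq> []" and "is_prefix_of v X"
    and "length u < length v"
  shows "\<exists>(k::nat) (lam :: nat \<Rightarrow> nat list) (kap :: nat \<Rightarrow> nat list).
           k \<ge> 1 \<and>
           (\<forall>i\<in>R X v. lam i \<noteq> [] \<and> set (lam i) \<subseteq> R X u) \<and>
           (\<forall>i\<in>R X u. kap i \<noteq> [] \<and> set (kap i) \<subseteq> R X v) \<and>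
           (\<forall>i\<in>R X u. ext (ret_subst tau X v) (kap i) = ext kap (ret_subst tau X u i)) \<and>
           (\<forall>i\<in>R X v. ext (ret_subst tau X u) (lam i) = ext lam (ret_subst tau X v i)) \<and>
           (\<forall>i\<in>R X v. ext kap (lam i) = (ext (ret_subst tau X v) ^^ k) [i]) \<and>
           (\<forall>i\<in>R X u. ext lam (kap i) = (ext (ret_subst tau X u) ^^ k) [i])"
proof -
  interpret F: fp tau A a X using assms(1,2) by unfold_locales
  interpret U: rw tau A a X u using assms by unfold_locales
  interpret V: rw tau A a X v using assms by unfold_locales
  let ?Tu = "ret_subst tau X u" and ?Tv = "ret_subst tau X v"
  let ?Ru = "R X u" and ?Rv = "R X v"
  let ?Thu = "Theta X u" and ?Thv = "Theta X v"
  have vu: "occurs_at u X p" if "occurs_at v X p" for p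
  proof -
    have "map X [p..<p + length u] = take (length u) (map X [p..<p + length v])"
      using assms(7) by (simp add: take_map)
    also have "\<dots> = take (length u) (F.pre (length v))" using that V.u_pre by (simp add: occurs_at_def)
    also have "\<dots> = F.pre (length u)" using assms(7) by (simp add: F.pre_def take_map)
    finally show ?thesis using U.u_pre by (simp add: occurs_at_def)
  qed
  have "\<forall>i\<in>?Rv. \<exists>w. w \<noteq> [] \<and> set w \<subseteq> ?Ru \<and> ext ?Thu w = ?Thv i"
  proof
    fix i assume i: "i \<in> ?Rv"
    obtain p q where pq: "p < q" "occurs_at v X p" "occurs_at v X q" "?Thv i = map X [p..<q]"
      using V.Theta_seg[OF i] by blast
    show "\<exists>w. w \<noteq> [] \<and> set w \<subseteq> ?Ru \<and> ext ?Thu w = ?Thv i"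
      using U.parse[OF vu[OF pq(2)] vu[OF pq(3)]] pq by auto
  qed
  then obtain lam where lam: "\<And>i. i \<in> ?Rv \<Longrightarrow> lam i \<noteq> [] \<and> set (lam i) \<subseteq> ?Ru \<and> ext ?Thu (lam i) = ?Thv i"
    by metis
  obtain k where k: "k \<ge> 1" "\<And>p. occurs_at u X p \<Longrightarrow> occurs_at v X (F.L k p)"
  proof (cases "\<forall>n. X n = a")
    case True
    have "occurs_at v X p" for p
      unfolding occurs_at_def by (subst V.u_pre) (intro nth_equalityI, auto simp: True)
    then show ?thesis using that[of 1] by blast
  next
    case False
    then have grow: "\<And>m. m < length ((F.T ^^ m) [a])" using F.dichotomy by blast
    define k where "k = length v"
    have "k \<ge> 1" using assms(5) by (simp add: k_def Suc_le_eq)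
    moreover have "occurs_at v X (F.L k p)" if o: "occurs_at u X p" for p
    proof -
      define rest where "rest = map X [1..<length u]"
      have pu: "F.pre (length u) = a # rest"
        using assms(3) F.X0 by (simp add: F.pre_def rest_def upt_conv_Cons)
      have "set rest \<subseteq> A" using F.set_pre pu by (metis set_subset_Cons subset_trans)
      have "(F.T ^^ k) (F.pre (length u)) = (F.T ^^ k) [a] @ (F.T ^^ k) rest"
        unfolding pu by (metis append_Cons append_Nil funpow_ext_append)
      then have "length ((F.T ^^ k) [a]) \<le> F.L k (length u)" by (simp add: F.L_def)
      then have "length v \<le> F.L k (length u)" using grow[of k] k_def by simp
      moreover have "occurs_at (F.pre (length u)) X p" using o U.u_pre by simp
      ultimately have "occurs_at (F.pre (length v)) X (F.L k p)" by (rule F.occ_transfer[rotated])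
      then show ?thesis using V.u_pre by simp
    qed
    ultimately show ?thesis using that by blast
  qed
  have "\<forall>i\<in>?Ru. \<exists>w. w \<noteq> [] \<and> set w \<subseteq> ?Rv \<and> ext ?Thv w = (F.T ^^ k) (?Thu i)"
  proof
    fix i assume i: "i \<in> ?Ru"
    obtain p q where pq: "p < q" "occurs_at u X p" "occurs_at u X q" "?Thu i = map X [p..<q]"
      using U.Theta_seg[OF i] by blast
    have e: "(F.T ^^ k) (?Thu i) = map X [F.L k p..<F.L k q]" using F.seg(1) pq by simp
    have lt: "F.L k p < F.L k q" using F.L_mono[of p q k] pq by simp
    show "\<exists>w. w \<noteq> [] \<and> set w \<subseteq> ?Rv \<and> ext ?Thv w = (F.T ^^ k) (?Thu i)"
      using V.parse[OF k(2)[OF pq(2)] k(2)[OF pq(3)]] lt e by auto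
  qed
  then obtain kap where kap: "\<And>i. i \<in> ?Ru \<Longrightarrow> kap i \<noteq> [] \<and> set (kap i) \<subseteq> ?Rv \<and> ext ?Thv (kap i) = (F.T ^^ k) (?Thu i)"
    by metis
  have lamM: "set (ext lam w) \<subseteq> ?Ru \<and> ext ?Thu (ext lam w) = ext ?Thv w" if "set w \<subseteq> ?Rv" for w
    by (rule ext_morph[OF _ that]) (use lam in blast)
  have kapM: "set (ext kap w) \<subseteq> ?Rv \<and> ext ?Thv (ext kap w) = (F.T ^^ k) (ext ?Thu w)" if "set w \<subseteq> ?Ru" for w
  proof -
    have "set (ext kap w) \<subseteq> ?Rv \<and> ext ?Thv (ext kap w) = ext (\<lambda>i. (F.T ^^ k) (?Thu i)) w"
      by (rule ext_morph[OF _ that]) (use kap in blast)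
    then show ?thesis by (simp add: funpow_ext_ext)
  qed
  have id1: "ext ?Tv (kap i) = ext kap (?Tu i)" if i: "i \<in> ?Ru" for i
  proof (rule V.ext_inj)
    have ki: "set (kap i) \<subseteq> ?Rv" using kap[OF i] by blast
    have ti: "set (?Tu i) \<subseteq> ?Ru" using U.ret_subst_prop[OF i] by blast
    show "set (ext ?Tv (kap i)) \<subseteq> ?Rv" using V.ret_morph[OF ki] by blast
    show "set (ext kap (?Tu i)) \<subseteq> ?Rv" using kapM[OF ti] by blast
    have "ext ?Thv (ext ?Tv (kap i)) = F.T ((F.T ^^ k) (?Thu i))"
      using V.ret_morph[OF ki] kap[OF i] by simp
    also have "\<dots> = (F.T ^^ k) (F.T (?Thu i))" by (rule funpow_swap1)
    also have "\<dots> = ext ?Thv (ext kap (?Tu i))"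
      using kapM[OF ti] U.ret_subst_prop[OF i] by simp
    finally show "ext ?Thv (ext ?Tv (kap i)) = ext ?Thv (ext kap (?Tu i))" .
  qed
  have id2: "ext ?Tu (lam i) = ext lam (?Tv i)" if i: "i \<in> ?Rv" for i
  proof (rule U.ext_inj)
    have li: "set (lam i) \<subseteq> ?Ru" using lam[OF i] by blast
    have ti: "set (?Tv i) \<subseteq> ?Rv" using V.ret_subst_prop[OF i] by blast
    show "set (ext ?Tu (lam i)) \<subseteq> ?Ru" using U.ret_morph[OF li] by blast
    show "set (ext lam (?Tv i)) \<subseteq> ?Ru" using lamM[OF ti] by blast
    have "ext ?Thu (ext ?Tu (lam i)) = F.T (?Thv i)"
      using U.ret_morph[OF li] lam[OF i] by simp
    also have "\<dots> = ext ?Thu (ext lam (?Tv i))"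
      using lamM[OF ti] V.ret_subst_prop[OF i] by simp
    finally show "ext ?Thu (ext ?Tu (lam i)) = ext ?Thu (ext lam (?Tv i))" .
  qed
  have id3: "ext kap (lam i) = (ext ?Tv ^^ k) [i]" if i: "i \<in> ?Rv" for i
  proof (rule V.ext_inj)
    have li: "set (lam i) \<subseteq> ?Ru" using lam[OF i] by blast
    have ii: "set [i] \<subseteq> ?Rv" using i by simp
    show "set (ext kap (lam i)) \<subseteq> ?Rv" using kapM[OF li] by blast
    show "set ((ext ?Tv ^^ k) [i]) \<subseteq> ?Rv" using V.ret_morph_k[OF ii] by blast
    have "ext ?Thv (ext kap (lam i)) = (F.T ^^ k) (?Thv i)"
      using kapM[OF li] lam[OF i] by simp
    also have "\<dots> = ext ?Thv ((ext ?Tv ^^ k) [i])"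
      using V.ret_morph_k[OF ii, of k] by simp
    finally show "ext ?Thv (ext kap (lam i)) = ext ?Thv ((ext ?Tv ^^ k) [i])" .
  qed
  have id4: "ext lam (kap i) = (ext ?Tu ^^ k) [i]" if i: "i \<in> ?Ru" for i
  proof (rule U.ext_inj)
    have ki: "set (kap i) \<subseteq> ?Rv" using kap[OF i] by blast
    have ii: "set [i] \<subseteq> ?Ru" using i by simp
    show "set (ext lam (kap i)) \<subseteq> ?Ru" using lamM[OF ki] by blast
    show "set ((ext ?Tu ^^ k) [i]) \<subseteq> ?Ru" using U.ret_morph_k[OF ii] by blast
    have "ext ?Thu (ext lam (kap i)) = (F.T ^^ k) (?Thu i)"
      using lamM[OF ki] kap[OF i] by simp
    also have "\<dots> = ext ?Thu ((ext ?Tu ^^ k) [i])"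
      using U.ret_morph_k[OF ii, of k] by simp
    finally show "ext ?Thu (ext lam (kap i)) = ext ?Thu ((ext ?Tu ^^ k) [i])" .
  qed
  show ?thesis
    apply (rule exI[of _ k], rule exI[of _ lam], rule exI[of _ kap])
    using k(1) lam kap id1 id2 id3 id4 by blast
qed



end
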